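(* There is no automorphism $\varphi$ of $E$ of type 4 which is a translation by a constant, i.e. such that for some basis $\{e_n\}_{n\in\mathbb{N}}$ of $L$ and some fixed $P\in E$ containing a summand of length $\ge2$, one has $\varphi(e_n)=-e_n+2P$ for all $n\in\mathbb{N}$.
   Context: $F$ is a field of characteristic zero, $L$ an infinite-dimensional $F$-vector space, $E$ the Grassmann algebra of $L$ (for a basis $\{e_n\}$ of $L$, basis $1$ and monomials $e_{i_1}\cdots e_{i_m}$, $i_1<\cdots<i_m$, of length $m$). An automorphism $\varphi$ of $E$ with $\varphi^2=\mathrm{id}$ is of type 4 if for every basis $\gamma$ of $L$ no element $v\in\gamma$ satisfies $\varphi(v)=\pm v$. *)

theory Defs
  imports Main
begin

text \<open>Concrete model of the Grassmann algebra E of a countably-infinite-dimensional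
vector space L over a field 'a.  L has standard basis g_0, g_1, ...; an element of E
is a finitely supported function from finite subsets S of nat to 'a, the value at S
being the coefficient of the monomial g_{i1}...g_{im} (i1 < ... < im, S = {i1,...,im}).\<close>

type_synonym 'a grass = "nat set \<Rightarrow> 'a"

definition gsupp :: "'a::zero grass \<Rightarrow> nat set set" where
  "gsupp f = {S. f S \<noteq> 0}"

definition gcarrier :: "'a::zero grass set" where
  "gcarrier = {f. finite (gsupp f) \<and> (\<forall>S \<in> gsupp f. finite S)}"

definition gadd :: "'a::ring grass \<Rightarrow> 'a grass \<Rightarrow> 'a grass" where
  "gadd f g = (\<lambda>S. f S + g S)"

definition gscale :: "'a::ring \<Rightarrow> 'a grass \<Rightarrow> 'a grass" where
  "gscale c f = (\<lambda>S. c * f S)"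

text \<open>Sign of the product of monomials e_S * e_T (S, T disjoint): number of inversions.\<close>
definition gsign :: "nat set \<Rightarrow> nat set \<Rightarrow> 'a::ring_1" where
  "gsign S T = (-1) ^ card {(i, j). i \<in> S \<and> j \<in> T \<and> j < i}"

definition gmult :: "'a::ring_1 grass \<Rightarrow> 'a grass \<Rightarrow> 'a grass" where
  "gmult f g = (\<lambda>U. \<Sum>(S, T) \<in> {(S, T). S \<in> gsupp f \<and> T \<in> gsupp g \<and> S \<inter> T = {} \<and> S \<union> T = U}.
      gsign S T * f S * g T)"

definition gL :: "'a::zero grass set" where
  "gL = {f \<in> gcarrier. \<forall>S \<in> gsupp f. card S = 1}"

definition lincomb :: "('a grass \<Rightarrow> 'a::ring) \<Rightarrow> 'a grass set \<Rightarrow> 'a grass" where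
  "lincomb c A = (\<lambda>S. \<Sum>v\<in>A. c v * v S)"

definition is_basis_L :: "'a::ring grass set \<Rightarrow> bool" where
  "is_basis_L B \<longleftrightarrow> B \<subseteq> gL
     \<and> (\<forall>A c. finite A \<and> A \<subseteq> B \<and> lincomb c A = (\<lambda>_. 0) \<longrightarrow> (\<forall>v\<in>A. c v = 0))
     \<and> (\<forall>x\<in>gL. \<exists>A c. finite A \<and> A \<subseteq> B \<and> x = lincomb c A)"

definition is_aut :: "('a::ring_1 grass \<Rightarrow> 'a grass) \<Rightarrow> bool" where
  "is_aut \<phi> \<longleftrightarrow> bij_betw \<phi> gcarrier gcarrier
     \<and> (\<forall>f\<in>gcarrier. \<forall>g\<in>gcarrier. \<phi> (gadd f g) = gadd (\<phi> f) (\<phi> g))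
     \<and> (\<forall>c. \<forall>f\<in>gcarrier. \<phi> (gscale c f) = gscale c (\<phi> f))
     \<and> (\<forall>f\<in>gcarrier. \<forall>g\<in>gcarrier. \<phi> (gmult f g) = gmult (\<phi> f) (\<phi> g))"

definition is_involution :: "('a::ring_1 grass \<Rightarrow> 'a grass) \<Rightarrow> bool" where
  "is_involution \<phi> \<longleftrightarrow> (\<forall>x\<in>gcarrier. \<phi> (\<phi> x) = x)"

definition type4 :: "('a::ring_1 grass \<Rightarrow> 'a grass) \<Rightarrow> bool" where
  "type4 \<phi> \<longleftrightarrow> is_aut \<phi> \<and> is_involution \<phi> \<and>
     (\<forall>B. is_basis_L B \<longrightarrow> \<not> (\<exists>v\<in>B. \<phi> v = v \<or> \<phi> v = (\<lambda>S. - v S)))"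

end

theory Submission
  imports Defs
begin

definition comb :: "(nat \<Rightarrow> 'a::ring) \<Rightarrow> nat \<Rightarrow> (nat \<Rightarrow> 'a grass) \<Rightarrow> 'a grass" where
  "comb d n f = (\<lambda>S. \<Sum>i<n. d i * f i S)"

definition iindep :: "(nat \<Rightarrow> 'a::ring grass) \<Rightarrow> bool" where
  "iindep f \<longleftrightarrow> (\<forall>n d. comb d n f = (\<lambda>_. 0) \<longrightarrow> (\<forall>i<n. d i = 0))"

definition ispan :: "(nat \<Rightarrow> 'a::ring grass) \<Rightarrow> bool" where
  "ispan f \<longleftrightarrow> (\<forall>x\<in>gL. \<exists>n d. x = comb d n f)"

lemma sum_ext0:
  fixes g :: "nat \<Rightarrow> 'a::comm_monoid_add"
  assumes "finite I" "I \<subseteq> {..<n}"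
  shows "(\<Sum>i<n. if i \<in> I then g i else 0) = (\<Sum>i\<in>I. g i)"
proof -
  have "(\<Sum>i<n. if i \<in> I then g i else 0) = (\<Sum>i\<in>{..<n} \<inter> I. g i)"
    by (simp add: sum.inter_restrict)
  also have "{..<n} \<inter> I = I" using assms by blast
  finally show ?thesis .
qed

lemma comb_ext:
  "comb (\<lambda>i. if i < n then d i else 0) (n + k) f = comb d n f"
proof -
  have "\<And>S. (\<Sum>i<n+k. (if i < n then d i else 0) * f i S) = (\<Sum>i<n. d i * f i S)"
  proof -
    fix S
    have "(\<Sum>i<n+k. (if i < n then d i else 0) * f i S) = (\<Sum>i<n+k. if i \<in> {..<n} then d i * f i S else 0)"
      by (rule sum.cong) auto
    also have "\<dots> = (\<Sum>i\<in>{..<n}. d i * f i S)"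
      by (rule sum_ext0) auto
    finally show "?thesis S" by simp
  qed
  then show ?thesis unfolding comb_def by simp
qed

lemma basis_to_idx:
  assumes "is_basis_L (range f)" "inj f"
  shows "iindep f" "ispan f"
proof -
  show "iindep f" unfolding iindep_def
  proof (rule allI, rule allI, rule impI)
    fix n d assume h: "comb d n f = (\<lambda>_. 0)"
    define c where "c = (\<lambda>v. d (inv f v))"
    have "lincomb c (f ` {..<n}) = comb d n f"
      unfolding lincomb_def comb_def c_def
      using assms(2) by (simp add: sum.reindex inj_on_def)
    have ind: "\<And>A c. finite A \<Longrightarrow> A \<subseteq> range f \<Longrightarrow> lincomb c A = (\<lambda>_. 0) \<Longrightarrow> \<forall>v\<in>A. c v = 0"
      using assms(1) unfolding is_basis_L_def by blast
    have "\<forall>v\<in>f ` {..<n}. c v = 0"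
      using ind[of "f ` {..<n}" c] h \<open>lincomb c (f ` {..<n}) = comb d n f\<close> by auto
    then show "\<forall>i<n. d i = 0" unfolding c_def using assms(2) by auto
  qed
  show "ispan f" unfolding ispan_def
  proof
    fix x :: "'a grass" assume "x \<in> gL"
    have spn: "\<forall>x\<in>gL. \<exists>A c. finite A \<and> A \<subseteq> range f \<and> x = lincomb c A"
      using assms(1) unfolding is_basis_L_def by (elim conjE) assumption
    obtain A c where A: "finite A" "A \<subseteq> range f" "x = lincomb c A"
      using spn \<open>x \<in> gL\<close> by blast
    define I where "I = f -` A"
    have fI: "finite I" unfolding I_def using A(1) assms(2) by (simp add: finite_vimageI)
    have AI: "A = f ` I" unfolding I_def using A(2) by (simp add: image_vimage_eq Int_absorb2)
    obtain n where n: "I \<subseteq> {..<n}" using fI by (auto simp: finite_nat_set_iff_bounded)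
    define d where "d = (\<lambda>i. if i \<in> I then c (f i) else 0)"
    have "x = comb d n f"
    proof
      fix S
      have "x S = (\<Sum>i\<in>I. c (f i) * f i S)"
        using A(3) AI assms(2) unfolding lincomb_def
        by (simp add: sum.reindex inj_on_def)
      also have "\<dots> = (\<Sum>i<n. if i \<in> I then c (f i) * f i S else 0)"
        by (rule sum_ext0[OF fI n, symmetric])
      also have "\<dots> = comb d n f S" unfolding comb_def d_def
        by (rule sum.cong) auto
      finally show "x S = comb d n f S" .
    qed
    then show "\<exists>n d. x = comb d n f" by blast
  qed
qed

lemma idx_to_basis:
  assumes "range f \<subseteq> gL" "iindep f" "ispan f"
  shows "is_basis_L (range f)"
  unfolding is_basis_L_def
proof (intro conjI allI impI ballI)
  show "range f \<subseteq> gL" by fact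
next
  fix A c v assume h: "finite A \<and> A \<subseteq> range f \<and> lincomb c A = (\<lambda>_. 0)" and v: "v \<in> A"
  define I where "I = inv f ` A"
  have fI: "finite I" unfolding I_def using h by simp
  have fv: "\<And>v. v \<in> A \<Longrightarrow> f (inv f v) = v" using h by (auto simp: f_inv_into_f)
  have AI: "f ` I = A" unfolding I_def image_image using fv by simp
  have inj: "inj_on f I" unfolding I_def inj_on_def using fv by auto
  obtain n where n: "I \<subseteq> {..<n}" using fI by (auto simp: finite_nat_set_iff_bounded)
  define d where "d = (\<lambda>i. if i \<in> I then c (f i) else 0)"
  have "comb d n f = (\<lambda>_. 0)"
  proof
    fix S
    have "comb d n f S = (\<Sum>i<n. if i \<in> I then c (f i) * f i S else 0)"
      unfolding comb_def d_def by (rule sum.cong) auto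
    also have "\<dots> = (\<Sum>i\<in>I. c (f i) * f i S)" by (rule sum_ext0[OF fI n])
    also have "\<dots> = lincomb c A S" unfolding lincomb_def AI[symmetric]
      using inj by (simp add: sum.reindex)
    finally show "comb d n f S = 0" using h by simp
  qed
  then have "\<forall>i<n. d i = 0" using assms(2) unfolding iindep_def by blast
  moreover have "inv f v \<in> I" using v I_def by simp
  moreover have "f (inv f v) = v" using v fv by simp
  ultimately show "c v = 0" using n unfolding d_def by (metis lessThan_iff subsetD)
next
  fix x :: "'a grass" assume "x \<in> gL"
  then obtain n d where x: "x = comb d n f" using assms(3) unfolding ispan_def by blast
  define c where "c = (\<lambda>v. \<Sum>i\<in>{i\<in>{..<n}. f i = v}. d i)"
  have "x = lincomb c (f ` {..<n})"
  proof
    fix S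
    have "lincomb c (f ` {..<n}) S = (\<Sum>v\<in>f ` {..<n}. \<Sum>i\<in>{i\<in>{..<n}. f i = v}. d i * f i S)"
      unfolding lincomb_def c_def by (auto simp: sum_distrib_right intro!: sum.cong)
    also have "\<dots> = (\<Sum>i<n. d i * f i S)"
      by (rule sum.image_gen[symmetric]) simp
    finally show "x S = lincomb c (f ` {..<n}) S" unfolding x comb_def by simp
  qed
  then show "\<exists>A c. finite A \<and> A \<subseteq> range f \<and> x = lincomb c A" by blast
qed

lemma sum_split01:
  fixes g :: "nat \<Rightarrow> 'a::comm_monoid_add"
  assumes "2 \<le> n"
  shows "(\<Sum>i<n. g i) = g 0 + g 1 + (\<Sum>i\<in>{2..<n}. g i)"
proof -
  have "{..<n} = insert 0 (insert 1 {2..<n})" using assms by auto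
  then show ?thesis by (simp add: add.assoc)
qed

lemma comb_shift:
  fixes e :: "nat \<Rightarrow> 'a::comm_ring grass"
  assumes "2 \<le> n"
  shows "comb d n (e(0 := (\<lambda>S. e 0 S - e 1 S))) = comb (d(1 := d 1 - d 0)) n e"
proof
  fix S
  let ?f = "e(0 := (\<lambda>S. e 0 S - e 1 S))"
  let ?d = "d(1 := d 1 - d 0)"
  have "comb d n ?f S = d 0 * ?f 0 S + d 1 * ?f 1 S + (\<Sum>i\<in>{2..<n}. d i * ?f i S)"
    unfolding comb_def by (rule sum_split01[OF assms])
  also have "(\<Sum>i\<in>{2..<n}. d i * ?f i S) = (\<Sum>i\<in>{2..<n}. ?d i * e i S)"
    by (rule sum.cong) auto
  also have "d 0 * ?f 0 S + d 1 * ?f 1 S = ?d 0 * e 0 S + ?d 1 * e 1 S"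
    by (simp add: algebra_simps)
  also have "?d 0 * e 0 S + ?d 1 * e 1 S + (\<Sum>i\<in>{2..<n}. ?d i * e i S) = comb ?d n e S"
    unfolding comb_def using sum_split01[OF assms, of "\<lambda>i. ?d i * e i S"] by simp
  finally show "comb d n ?f S = comb ?d n e S" .
qed

lemma new_basis:
  fixes e :: "nat \<Rightarrow> 'a::comm_ring grass"
  assumes "iindep e" "ispan e"
  shows "iindep (e(0 := (\<lambda>S. e 0 S - e 1 S)))" "ispan (e(0 := (\<lambda>S. e 0 S - e 1 S)))"
proof -
  let ?f = "e(0 := (\<lambda>S. e 0 S - e 1 S))"
  show "iindep ?f" unfolding iindep_def
  proof (rule allI, rule allI, rule impI)
    fix n d assume h: "comb d n ?f = (\<lambda>_. 0)"
    define d2 where "d2 = (\<lambda>i. if i < n then d i else 0)"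
    have "comb d2 (n+2) ?f = (\<lambda>_. 0)" unfolding d2_def comb_ext h ..
    then have "comb (d2(1 := d2 1 - d2 0)) (n+2) e = (\<lambda>_. 0)"
      using comb_shift[of "n+2" d2 e] by simp
    then have z: "\<forall>i<n+2. (d2(1 := d2 1 - d2 0)) i = 0"
      using assms(1) unfolding iindep_def by blast
    have z0: "d2 0 = 0" using z[rule_format, of 0] by simp
    have z1: "d2 1 = 0" using z[rule_format, of 1] z0 by simp
    have "\<forall>i<n+2. d2 i = 0"
    proof (intro allI impI)
      fix i assume "i < n+2"
      then show "d2 i = 0" using z[rule_format, of i] z1 by (cases "i = 1") auto
    qed
    note a = this
    show "\<forall>i<n. d i = 0"
    proof (intro allI impI)
      fix i assume i: "i < n"
      then have "d2 i = 0" using a by simp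
      then show "d i = 0" using i unfolding d2_def by simp
    qed
  qed
  show "ispan ?f" unfolding ispan_def
  proof
    fix x :: "'a grass" assume "x \<in> gL"
    then obtain n d where x: "x = comb d n e" using assms(2) unfolding ispan_def by blast
    define d2 where "d2 = (\<lambda>i. if i < n then d i else 0)"
    define d3 where "d3 = d2(1 := d2 1 + d2 0)"
    have "comb d3 (n+2) ?f = comb (d3(1 := d3 1 - d3 0)) (n+2) e"
      by (rule comb_shift) simp
    also have "d3(1 := d3 1 - d3 0) = d2" unfolding d3_def by auto
    also have "comb d2 (n+2) e = x" unfolding d2_def comb_ext x ..
    finally show "\<exists>n d. x = comb d n ?f" by metis
  qed
qed

lemma gL_diff:
  fixes a b :: "'a::ring grass"
  assumes "a \<in> gL" "b \<in> gL"
  shows "(\<lambda>S. a S - b S) \<in> gL"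
proof -
  have sub: "gsupp (\<lambda>S. a S - b S) \<subseteq> gsupp a \<union> gsupp b"
    unfolding gsupp_def by auto
  show ?thesis using assms sub unfolding gL_def gcarrier_def
    by (auto intro: finite_subset)
qed

lemma gscale_carrier:
  assumes "a \<in> gcarrier"
  shows "gscale c a \<in> gcarrier"
proof -
  have "gsupp (gscale c a) \<subseteq> gsupp a" unfolding gsupp_def gscale_def by auto
  then show ?thesis using assms unfolding gcarrier_def by (auto intro: finite_subset)
qed

theorem mainTheorem13:
  fixes \<phi> :: "'a::field_char_0 grass \<Rightarrow> 'a grass"
  shows "\<not> (type4 \<phi> \<and>
     (\<exists>e :: nat \<Rightarrow> 'a grass. \<exists>P \<in> gcarrier.
        inj e \<and> is_basis_L (range e) \<and> (\<exists>S. card S \<ge> 2 \<and> P S \<noteq> 0) \<and>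
        (\<forall>n. \<phi> (e n) = (\<lambda>S. - e n S + 2 * P S))))"
proof
  assume "type4 \<phi> \<and>
     (\<exists>e :: nat \<Rightarrow> 'a grass. \<exists>P \<in> gcarrier.
        inj e \<and> is_basis_L (range e) \<and> (\<exists>S. card S \<ge> 2 \<and> P S \<noteq> 0) \<and>
        (\<forall>n. \<phi> (e n) = (\<lambda>S. - e n S + 2 * P S)))"
  then have t4: "type4 \<phi>" and "\<exists>e :: nat \<Rightarrow> 'a grass. \<exists>P \<in> gcarrier.
        inj e \<and> is_basis_L (range e) \<and> (\<exists>S. card S \<ge> 2 \<and> P S \<noteq> 0) \<and>
        (\<forall>n. \<phi> (e n) = (\<lambda>S. - e n S + 2 * P S))" by (rule conjunct1, rule conjunct2)
  from this(2) obtain e :: "nat \<Rightarrow> 'a grass" where "\<exists>P \<in> gcarrier.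
        inj e \<and> is_basis_L (range e) \<and> (\<exists>S. card S \<ge> 2 \<and> P S \<noteq> 0) \<and>
        (\<forall>n. \<phi> (e n) = (\<lambda>S. - e n S + 2 * P S))" ..
  then obtain P where "P \<in> gcarrier" and H: "inj e \<and> is_basis_L (range e) \<and> (\<exists>S. card S \<ge> 2 \<and> P S \<noteq> 0) \<and>
        (\<forall>n. \<phi> (e n) = (\<lambda>S. - e n S + 2 * P S))" ..
  have inj: "inj e" and B: "is_basis_L (range e)" using H by blast+
  have ph: "\<And>n. \<phi> (e n) = (\<lambda>S. - e n S + 2 * P S)" using H by blast
  define v where "v = (\<lambda>S. e 0 S - e 1 S)"
  define f where "f = e(0 := v)"
  have eL: "\<And>n. e n \<in> gL" using B unfolding is_basis_L_def by auto
  have eC: "\<And>n. e n \<in> gcarrier" using eL unfolding gL_def by auto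
  have vL: "v \<in> gL" unfolding v_def by (rule gL_diff[OF eL eL])
  have fL: "range f \<subseteq> gL" unfolding f_def using eL vL by auto
  have ie: "iindep e" "ispan e" using basis_to_idx[OF B inj] by auto
  have "iindep f" "ispan f" using new_basis[OF ie] unfolding f_def v_def by auto
  then have fB: "is_basis_L (range f)" by (rule idx_to_basis[OF fL])
  have vin: "v \<in> range f" unfolding f_def by (metis fun_upd_same rangeI)
  have phv: "\<phi> v = (\<lambda>S. - v S)"
  proof -
    have isaut: "is_aut \<phi>" using t4 unfolding type4_def by blast
    have veq: "v = gadd (e 0) (gscale (-1) (e 1))"
      unfolding v_def gadd_def gscale_def by simp
    have add: "\<And>f g. f \<in> gcarrier \<Longrightarrow> g \<in> gcarrier \<Longrightarrow> \<phi> (gadd f g) = gadd (\<phi> f) (\<phi> g)"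
      using isaut unfolding is_aut_def by simp
    have scl: "\<And>c f. f \<in> gcarrier \<Longrightarrow> \<phi> (gscale c f) = gscale c (\<phi> f)"
      using isaut unfolding is_aut_def by simp
    have "\<phi> v = gadd (\<phi> (e 0)) (\<phi> (gscale (-1) (e 1)))"
      unfolding veq by (rule add[OF eC gscale_carrier[OF eC]])
    also have "\<phi> (gscale (-1) (e 1)) = gscale (-1) (\<phi> (e 1))"
      by (rule scl[OF eC])
    finally show ?thesis unfolding ph gadd_def gscale_def v_def
      by (simp add: algebra_simps)
  qed
  have "\<not> (\<exists>w\<in>range f. \<phi> w = w \<or> \<phi> w = (\<lambda>S. - w S))"
    using t4 fB unfolding type4_def by blast
  moreover have "\<exists>w\<in>range f. \<phi> w = w \<or> \<phi> w = (\<lambda>S. - w S)"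
    by (rule bexI[of _ v]) (use phv vin in auto)
  ultimately show False by blast
qed

end
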